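(* Let $N\ge 2$ and let $p$ be a path of length $N$ with steps $s_0,\dots,s_{N-1}$. Then $p$ is a perfect star path if and only if there is an integer constant $S$ with $|S|=L>1$ such that $s_n=S$ for all $n\in\{0,1,\dots,N-1\}$.
   Context: A path of length $N$ is a vector $p=(p_0,\dots,p_{N-1})$ whose entries are the integers $0,\dots,N-1$ in some order; indices are cyclic, $p_N=p_0$. The path differences are $d_n=p_{n+1}-p_n$, and the steps are $s_n=d_n$ if $|d_n|<N/2$; $s_n=N/2$ if $|d_n|=N/2$; $s_n=d_n-N$ if $d_n>N/2$; $s_n=d_n+N$ if $d_n<-N/2$. The edge lengths of $p$ are $|s_0|,\dots,|s_{N-1}|$. The path is a star path if $|s_n|\ne 1$ for all $n$ (equivalently, for every $n$, $(p_{n+1}-p_n)\bmod N\notin\{1,N-1\}$, where $x\bmod N$ is the remainder in $\{0,\dots,N-1\}$). A perfect star path is a star path all of whose edge lengths $|s_n|$ are equal. *)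

theory Defs
  imports Main
begin

definition is_path :: "nat \<Rightarrow> int list \<Rightarrow> bool" where
  "is_path N p \<longleftrightarrow> length p = N \<and> distinct p \<and> set p = {0..<int N}"

definition path_diff :: "nat \<Rightarrow> int list \<Rightarrow> nat \<Rightarrow> int" where
  "path_diff N p n = p ! (Suc n mod N) - p ! (n mod N)"

text \<open>Steps: s_n = d_n if |d_n| < N/2; N/2 if |d_n| = N/2; d_n - N if d_n > N/2;
d_n + N if d_n < -N/2.  (Comparisons with N/2 are written as 2*d vs N to stay in int;
the value N/2 only arises when N is even.)\<close>
definition path_step :: "nat \<Rightarrow> int list \<Rightarrow> nat \<Rightarrow> int" where
  "path_step N p n =
     (let d = path_diff N p n in
      if 2 * \<bar>d\<bar> < int N then d
      else if 2 * \<bar>d\<bar> = int N then int N div 2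
      else if 2 * d > int N then d - int N
      else d + int N)"

definition edge_length :: "nat \<Rightarrow> int list \<Rightarrow> nat \<Rightarrow> int" where
  "edge_length N p n = \<bar>path_step N p n\<bar>"

definition star_path :: "nat \<Rightarrow> int list \<Rightarrow> bool" where
  "star_path N p \<longleftrightarrow> is_path N p \<and> (\<forall>n<N. edge_length N p n \<noteq> 1)"

definition perfect_star_path :: "nat \<Rightarrow> int list \<Rightarrow> bool" where
  "perfect_star_path N p \<longleftrightarrow> star_path N p \<and>
     (\<forall>m<N. \<forall>n<N. edge_length N p m = edge_length N p n)"

end

theory Submission
  imports Defs
begin

lemma elem_range:
  assumes "is_path N p" "N \<ge> 1"
  shows "0 \<le> p ! (i mod N) \<and> p ! (i mod N) < int N"
proof -
  have "i mod N < length p" using assms by (simp add: is_path_def)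
  then have "p ! (i mod N) \<in> set p" by simp
  then show ?thesis using assms by (auto simp: is_path_def)
qed

lemma elem_inj:
  assumes "is_path N p" "N \<ge> 1" "p ! (i mod N) = p ! (j mod N)"
  shows "i mod N = j mod N"
proof -
  have "i mod N < length p" "j mod N < length p" "distinct p" using assms by (auto simp: is_path_def)
  then show ?thesis using assms(3) nth_eq_iff_index_eq by blast
qed

lemma step_cong:
  "\<exists>k. path_step N p n = path_diff N p n + k * int N"
proof -
  define d where "d = path_diff N p n"
  show ?thesis
  proof (cases "2 * \<bar>d\<bar> < int N")
    case True then show ?thesis by (auto simp: path_step_def d_def[symmetric] Let_def intro: exI[of _ 0])
  next
    case F1: False
    show ?thesis
    proof (cases "2 * \<bar>d\<bar> = int N")
      case True
      then have "d = int N div 2 \<or> d = - (int N div 2)" by (cases "d \<ge> 0") auto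
      then show ?thesis using True F1
        apply (simp add: path_step_def d_def[symmetric] Let_def)
        apply (elim disjE)
         apply (rule exI[of _ 0], simp)
        apply (rule exI[of _ 1]) using True by auto
    next
      case False
      then show ?thesis using F1
        apply (simp add: path_step_def d_def[symmetric] Let_def)
        by (metis add_uminus_conv_diff mult_1 mult_minus_left)
    qed
  qed
qed

lemma step_bound:
  assumes "is_path N p" "N \<ge> 1"
  shows "2 * \<bar>path_step N p n\<bar> \<le> int N \<and> (2 * \<bar>path_step N p n\<bar> = int N \<longrightarrow> path_step N p n = int N div 2)"
proof -
  have a: "0 \<le> p ! (Suc n mod N) \<and> p ! (Suc n mod N) < int N" using elem_range assms by simp
  have b: "0 \<le> p ! (n mod N) \<and> p ! (n mod N) < int N" using elem_range assms by simp
  have "\<bar>path_diff N p n\<bar> < int N" using a b unfolding path_diff_def by linarith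
  then show ?thesis by (auto simp: path_step_def Let_def)
qed

lemma step_nonzero:
  assumes "is_path N p" "N \<ge> 2"
  shows "path_step N p n \<noteq> 0"
proof
  assume h: "path_step N p n = 0"
  obtain k where k: "path_step N p n = path_diff N p n + k * int N" using step_cong by blast
  have a: "0 \<le> p ! (Suc n mod N) \<and> p ! (Suc n mod N) < int N" using elem_range assms by simp
  have b: "0 \<le> p ! (n mod N) \<and> p ! (n mod N) < int N" using elem_range assms by simp
  have "p ! (Suc n mod N) - p ! (n mod N) = - k * int N" using h k by (simp add: path_diff_def)
  then have "k = 0" using a b
    by (smt (verit, ccfv_SIG) mult_le_cancel_right1 mult_minus_left)
  then have "p ! (Suc n mod N) = p ! (n mod N)" using h k by (simp add: path_diff_def)
  then have "Suc n mod N = n mod N" using elem_inj assms by simp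
  then have "N dvd 1" using mod_eq_dvd_iff_nat[of n "Suc n" N] by simp
  then show False using assms by simp
qed

lemma no_reverse:
  assumes "is_path N p" "N \<ge> 3" "path_step N p (Suc n) = - path_step N p n"
  shows False
proof -
  obtain k where k: "path_step N p n = path_diff N p n + k * int N" using step_cong by blast
  obtain j where j: "path_step N p (Suc n) = path_diff N p (Suc n) + j * int N" using step_cong by blast
  have a: "0 \<le> p ! (Suc (Suc n) mod N) \<and> p ! (Suc (Suc n) mod N) < int N" using elem_range assms by simp
  have b: "0 \<le> p ! (n mod N) \<and> p ! (n mod N) < int N" using elem_range assms by simp
  have "p ! (Suc (Suc n) mod N) - p ! (n mod N) = - (k + j) * int N"
    using k j assms(3) by (simp add: path_diff_def algebra_simps)
  then have "k + j = 0" using a b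
    by (smt (verit, ccfv_SIG) mult_le_cancel_right1 mult_minus_left)
  then have "p ! (Suc (Suc n) mod N) = p ! (n mod N)"
    using \<open>p ! (Suc (Suc n) mod N) - p ! (n mod N) = - (k + j) * int N\<close> by simp
  then have "Suc (Suc n) mod N = n mod N" using elem_inj assms by simp
  then have "N dvd 2" using mod_eq_dvd_iff_nat[of n "Suc (Suc n)" N] by simp
  then show False using assms by (auto dest: dvd_imp_le)
qed

theorem mainTheorem3:
  fixes N :: nat and p :: "int list"
  assumes "N \<ge> 2" and "is_path N p"
  shows "perfect_star_path N p \<longleftrightarrow>
           (\<exists>S::int. \<bar>S\<bar> > 1 \<and> (\<forall>n<N. path_step N p n = S))"
proof
  assume "\<exists>S::int. \<bar>S\<bar> > 1 \<and> (\<forall>n<N. path_step N p n = S)"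
  then obtain S where S: "\<bar>S\<bar> > 1" "\<forall>n<N. path_step N p n = S" by blast
  have "\<forall>n<N. edge_length N p n = \<bar>S\<bar>" using S(2) by (simp add: edge_length_def)
  then show "perfect_star_path N p" using assms S(1)
    unfolding perfect_star_path_def star_path_def by simp
next
  assume P: "perfect_star_path N p"
  define L where "L = \<bar>path_step N p 0\<bar>"
  have N0: "0 < N" using assms(1) by simp
  have eqL: "\<bar>path_step N p n\<bar> = L" if "n < N" for n
  proof -
    have "edge_length N p n = edge_length N p 0" using P that N0 unfolding perfect_star_path_def by blast
    then show ?thesis unfolding L_def edge_length_def .
  qed
  have L1: "L \<noteq> 1"
  proof -
    have "edge_length N p 0 \<noteq> 1" using P N0 unfolding perfect_star_path_def star_path_def by blast
    then show ?thesis unfolding L_def edge_length_def .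
  qed
  have L0: "L \<noteq> 0" using step_nonzero[OF assms(2) assms(1)] unfolding L_def by simp
  have Lge: "L \<ge> 0" unfolding L_def by simp
  have bnd: "2 * L \<le> int N" using step_bound[OF assms(2)] assms(1) unfolding L_def by simp
  show "\<exists>S::int. \<bar>S\<bar> > 1 \<and> (\<forall>n<N. path_step N p n = S)"
  proof (cases "2 * L = int N")
    case True
    have "path_step N p n = int N div 2" if "n < N" for n
      using step_bound[OF assms(2), of n] assms(1) eqL[OF that] True by simp
    moreover have "\<bar>int N div 2\<bar> > 1"
    proof -
      have "int N div 2 = L" using True by simp
      then show ?thesis using L0 L1 Lge by simp
    qed
    ultimately show ?thesis by blast
  next
    case False
    have "int N \<ge> 3" using False bnd L0 L1 Lge by linarith
    then have N3: "N \<ge> 3" by simp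
    have "\<forall>n<N. path_step N p n = path_step N p 0"
    proof (intro allI impI)
      fix n assume "n < N"
      then show "path_step N p n = path_step N p 0"
      proof (induction n)
        case 0 then show ?case by simp
      next
        case (Suc n)
        have "\<bar>path_step N p (Suc n)\<bar> = \<bar>path_step N p n\<bar>" using eqL Suc.prems by simp
        then have "path_step N p (Suc n) = path_step N p n \<or> path_step N p (Suc n) = - path_step N p n"
          by linarith
        moreover have "path_step N p (Suc n) \<noteq> - path_step N p n"
          using no_reverse[OF assms(2) N3, of n] by blast
        ultimately show ?case using Suc by simp
      qed
    qed
    moreover have "\<bar>path_step N p 0\<bar> > 1" using L0 L1 Lge unfolding L_def by linarith
    ultimately show ?thesis by blast
  qed
qed

end
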